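(* For every $s\in\{1,\dots,n-1\}$, every $A\in M_{s+1,n-s}(\mathbb R)$ and every $\mathbf w\in\mathcal S_{n+1,n}$, one has $\max_{I\ni0,\,|I|=n}\|\mathbf c^+_{I,\mathbf w}+A\mathbf c^-_{I,\mathbf w}\|\ge1$.
   Context: Sup-norms. Let $\mathbf e_0,\dots,\mathbf e_n$ be the standard basis of $\mathbb R^{n+1}$, $\mathbf e_I=\mathbf e_{i_1}\wedge\dots\wedge\mathbf e_{i_j}$ for $I=\{i_1<\dots<i_j\}\subset\{0,\dots,n\}$, and write $\mathbf w\in\bigwedge^j\mathbb R^{n+1}$ as $\sum_{|I|=j}w_I\mathbf e_I$. $\mathcal S_{n+1,j}$ is the set of elements $\mathbf v_1\wedge\dots\wedge\mathbf v_j$ with $\mathbf v_1,\dots,\mathbf v_j$ a basis of a rank-$j$ subgroup of $\mathbb Z^{n+1}$. For $I\ni0$, $i\notin I$, $l(I,i)$ is the number of elements of $I$ strictly between $0$ and $i$. For $I\ni0$, $|I|=j$: $\mathbf c_{I,\mathbf w}=w_I\mathbf e_0+\sum_{i\in\{1,\dots,n\}\setminus I}(-1)^{l(I,i)}w_{I\cup\{i\}\setminus\{0\}}\mathbf e_i$; $\mathbf c^+_{I,\mathbf w}\in\mathbb R^{s+1}$ is its vector of coordinates $0,\dots,s$ and $\mathbf c^-_{I,\mathbf w}\in\mathbb R^{n-s}$ its vector of coordinates $s+1,\dots,n$. *)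

theory Defs
  imports "HOL-Analysis.Analysis"
begin

text \<open>Integer vectors of Z^(n+1) are functions nat => int, only coordinates 0..n matter.
  A family of j vectors is v :: nat => nat => int, v k i = i-th coordinate of the (k+1)-th vector, k < j.\<close>

text \<open>The family v_1..v_j is a basis of the subgroup it generates, which then has rank j,
  i.e. the vectors are Z-linearly independent.\<close>
definition int_lin_indep :: "nat \<Rightarrow> nat \<Rightarrow> (nat \<Rightarrow> nat \<Rightarrow> int) \<Rightarrow> bool" where
  "int_lin_indep n j v \<longleftrightarrow>
     (\<forall>a :: nat \<Rightarrow> int. (\<forall>i\<le>n. (\<Sum>k<j. a k * v k i) = 0) \<longrightarrow> (\<forall>k<j. a k = 0))"

definition ldet :: "nat \<Rightarrow> (nat \<Rightarrow> nat \<Rightarrow> real) \<Rightarrow> real" where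
  "ldet j M = (\<Sum>p\<in>{p. p permutes {..<j}}. of_int (sign p) * (\<Prod>l<j. M l (p l)))"

text \<open>Coordinate w_I of v_1 \<and> ... \<and> v_j on e_I, I = {i_1 < ... < i_j}: det (v_k(i_l))_{k,l}.\<close>
definition wedge_coord :: "nat \<Rightarrow> (nat \<Rightarrow> nat \<Rightarrow> int) \<Rightarrow> nat set \<Rightarrow> real" where
  "wedge_coord j v I = ldet j (\<lambda>k l. real_of_int (v k (sorted_list_of_set I ! l)))"

text \<open>Multivectors in \<And>^j R^(n+1) are represented by their coordinate function on subsets
  (zero outside the j-subsets of {0..n}).  S_{n+1,j}:\<close>
definition S_set :: "nat \<Rightarrow> nat \<Rightarrow> (nat set \<Rightarrow> real) set" where
  "S_set n j = {w. \<exists>v. int_lin_indep n j v \<and>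
       w = (\<lambda>I. if I \<subseteq> {0..n} \<and> card I = j then wedge_coord j v I else 0)}"

definition lcount :: "nat set \<Rightarrow> nat \<Rightarrow> nat" where
  "lcount I i = card {k\<in>I. 0 < k \<and> k < i}"

definition cvec :: "nat \<Rightarrow> nat set \<Rightarrow> (nat set \<Rightarrow> real) \<Rightarrow> nat \<Rightarrow> real" where
  "cvec n I w i =
     (if i = 0 then w I
      else if i \<in> {1..n} - I then (-1) ^ lcount I i * w (I \<union> {i} - {0})
      else 0)"

text \<open>Sup norm of c^+ + A c^- where c^+ = (c_0..c_s), c^- = (c_{s+1}..c_n), A an (s+1) x (n-s) matrix.\<close>
definition supnorm_plus :: "nat \<Rightarrow> nat \<Rightarrow> (nat \<Rightarrow> nat \<Rightarrow> real) \<Rightarrow> (nat \<Rightarrow> real) \<Rightarrow> real" where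
  "supnorm_plus n s A c = Max ((\<lambda>r. \<bar>c r + (\<Sum>k<n-s. A r k * c (s + 1 + k))\<bar>) ` {0..s})"

end

theory Submission imports Defs "Jordan_Normal_Form.DL_Rank" "HOL-Combinatorics.Permutations" begin


definition Mx :: "nat \<Rightarrow> (nat \<Rightarrow> nat \<Rightarrow> int) \<Rightarrow> nat list \<Rightarrow> int mat" where
  "Mx j v cs = mat j j (\<lambda>(k,l). v k (cs ! l))"

lemma ldet_eq: "ldet j (\<lambda>k l. real_of_int (X k l)) = real_of_int (det (mat j j (\<lambda>(k,l). X k l)))"
proof -
  have "det (mat j j (\<lambda>(k,l). X k l)) = (\<Sum>p\<in>{p. p permutes {0..<j}}. of_int (sign p) * (\<Prod>i = 0..<j. X i (p i)))"
    by (subst det_def'[of _ j]) (auto intro!: sum.cong prod.cong simp: permutes_in_image)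
  then show ?thesis unfolding ldet_def
    by (simp add: of_int_sum of_int_prod atLeast0LessThan)
qed

lemma det0: "det (mat 0 0 f :: int mat) = 1"
  by (simp add: det_def)



lemma mat_delete_Mx:
  assumes "length L = j" "k < Suc j"
  shows "mat_delete (Mx (Suc j) v (L @ [i])) k j = mat j j (\<lambda>(k',l). v (if k' < k then k' else Suc k') (L ! l))"
  using assms by (intro eq_matI) (auto simp: mat_delete_def Mx_def nth_append)

lemma dep:
  fixes v :: "nat \<Rightarrow> nat \<Rightarrow> int" and C :: "nat set"
  assumes "\<forall>cs. distinct cs \<and> length cs = j \<and> set cs \<subseteq> C \<longrightarrow> det (Mx j v cs) = 0"
  shows "\<exists>a. (\<forall>i\<in>C. (\<Sum>k<j. a k * v k i) = 0) \<and> (\<exists>k<j. a k \<noteq> 0)"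
  using assms
proof (induction j)
  case 0
  then have "det (Mx 0 v []) = 0" by auto
  then show ?case by (simp add: Mx_def det0)
next
  case (Suc j)
  show ?case
  proof (cases "\<forall>cs. distinct cs \<and> length cs = j \<and> set cs \<subseteq> C \<longrightarrow> det (Mx j v cs) = 0")
    case True
    from Suc.IH[OF True] obtain a where a: "\<forall>i\<in>C. (\<Sum>k<j. a k * v k i) = 0" "\<exists>k<j. a k \<noteq> 0" by blast
    show ?thesis
      by (rule exI[of _ "a(j:=0)"]) (use a in auto)
  next
    case False
    then obtain L where L: "distinct L" "length L = j" "set L \<subseteq> C" "det (Mx j v L) \<noteq> 0" by blast
    define a where "a k = (-1)^(k+j) * det (mat j j (\<lambda>(k',l). v (if k' < k then k' else Suc k') (L ! l)))" for k
    have "(\<Sum>k<Suc j. a k * v k i) = 0" if i: "i \<in> C" for i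
    proof -
      have car: "Mx (Suc j) v (L @ [i]) \<in> carrier_mat (Suc j) (Suc j)" by (simp add: Mx_def)
      have "det (Mx (Suc j) v (L @ [i])) = (\<Sum>k<Suc j. Mx (Suc j) v (L @ [i]) $$ (k,j) * cofactor (Mx (Suc j) v (L @ [i])) k j)"
        by (rule laplace_expansion_column[OF car]) simp
      also have "\<dots> = (\<Sum>k<Suc j. a k * v k i)"
        by (intro sum.cong refl) (simp add: cofactor_def mat_delete_Mx[OF L(2)] a_def, simp add: Mx_def nth_append L(2))
      finally have eq: "det (Mx (Suc j) v (L @ [i])) = (\<Sum>k<Suc j. a k * v k i)" .
      have "det (Mx (Suc j) v (L @ [i])) = 0"
      proof (cases "i \<in> set L")
        case True
        then obtain l where l: "l < j" "L ! l = i" using L(2) by (auto simp: in_set_conv_nth)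
        show ?thesis
          by (rule det_identical_cols[OF car, of l j]) (use l L in \<open>auto simp: Mx_def nth_append intro!: eq_vecI\<close>)
      next
        case False
        then show ?thesis using Suc.prems L i by auto
      qed
      then show ?thesis using eq by simp
    qed
    moreover have "a j \<noteq> 0"
    proof -
      have "mat j j (\<lambda>(k',l). v (if k' < j then k' else Suc k') (L ! l)) = Mx j v L"
        by (intro eq_matI) (auto simp: Mx_def)
      then show ?thesis using L(4) by (simp add: a_def)
    qed
    ultimately show ?thesis by blast
  qed
qed


lemma det_perm:
  assumes "distinct cs" "length cs = j"
  shows "(\<exists>p. p permutes {0..<j} \<and> det (Mx j v (sorted_list_of_set (set cs))) = of_int (sign p) * det (Mx j v cs))"
proof -
  let ?ys = "sorted_list_of_set (set cs)"
  have "mset ?ys = mset cs" using assms(1)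
    by (simp add: set_eq_iff_mset_eq_distinct[symmetric])
  then obtain p where p: "p permutes {..<length cs}" "permute_list p cs = ?ys"
    by (rule mset_eq_permutation)
  have p': "p permutes {0..<j}" using p(1) assms(2) by (simp add: lessThan_atLeast0)
  have pl: "\<And>x. x < length cs \<Longrightarrow> p x < length cs" using permutes_in_image[OF p(1)] by auto
  have car: "transpose_mat (Mx j v cs) \<in> carrier_mat j j" by (simp add: Mx_def)
  have "Mx j v ?ys = transpose_mat (mat j j (\<lambda>(i,k). (transpose_mat (Mx j v cs)) $$ (p i, k)))"
  proof (rule eq_matI)
    fix i k assume ik: "i < dim_row (transpose_mat (mat j j (\<lambda>(i,k). (transpose_mat (Mx j v cs)) $$ (p i, k))))"
       "k < dim_col (transpose_mat (mat j j (\<lambda>(i,k). (transpose_mat (Mx j v cs)) $$ (p i, k))))"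
    then have ik': "i < j" "k < j" by auto
    have pk: "p k < j" using pl ik' assms(2) by auto
    have "?ys ! k = cs ! p k" unfolding p(2)[symmetric] using p(1) ik' assms(2) by (simp add: permute_list_nth)
    then show "Mx j v ?ys $$ (i, k) = transpose_mat (mat j j (\<lambda>(i,k). (transpose_mat (Mx j v cs)) $$ (p i, k))) $$ (i, k)"
      using ik' pk by (simp add: Mx_def)
  qed (auto simp: Mx_def)
  then have "det (Mx j v ?ys) = det (mat j j (\<lambda>(i,k). (transpose_mat (Mx j v cs)) $$ (p i, k)))"
    by (simp add: det_transpose[of _ j])
  also have "\<dots> = of_int (sign p) * det (Mx j v cs)"
    using det_permute_rows[OF car p'] det_transpose[of "Mx j v cs" j] by (simp add: Mx_def)
  finally show ?thesis using p' by blast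
qed

lemma exists_nonzero:
  assumes "int_lin_indep n j v"
  shows "\<exists>J. J \<subseteq> {0..n} \<and> card J = j \<and> det (Mx j v (sorted_list_of_set J)) \<noteq> 0"
proof (rule ccontr)
  assume H: "\<not> ?thesis"
  have "\<forall>cs. distinct cs \<and> length cs = j \<and> set cs \<subseteq> {..n} \<longrightarrow> det (Mx j v cs) = 0"
  proof (intro allI impI)
    fix cs assume cs: "distinct cs \<and> length cs = j \<and> set cs \<subseteq> {..n}"
    have "set cs \<subseteq> {0..n}" "card (set cs) = j" using cs distinct_card[of cs] by auto
    then have "det (Mx j v (sorted_list_of_set (set cs))) = 0"
      using H by blast
    moreover obtain p where "p permutes {0..<j}" "det (Mx j v (sorted_list_of_set (set cs))) = of_int (sign p) * det (Mx j v cs)"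
      using det_perm[of cs j v] cs by blast
    moreover have "of_int (sign p) \<noteq> (0::int)" by (simp add: sign_def)
    ultimately show "det (Mx j v cs) = 0" by simp
  qed
  from dep[OF this] obtain a where "\<forall>i\<in>{..n}. (\<Sum>k<j. a k * v k i) = 0" "\<exists>k<j. a k \<noteq> 0" by blast
  then have "\<forall>i\<le>n. (\<Sum>k<j. a k * v k i) = 0" by auto
  then have "\<forall>k<j. a k = 0" using assms unfolding int_lin_indep_def by blast
  then show False using \<open>\<exists>k<j. a k \<noteq> 0\<close> by blast
qed



lemma supnorm_ge:
  assumes "r \<le> s" "\<forall>i>s. c i = 0"
  shows "\<bar>c r\<bar> \<le> supnorm_plus n s A c"
proof -
  have "(\<Sum>k<n-s. A r k * c (s + 1 + k)) = 0" using assms(2) by simp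
  then have "\<bar>c r\<bar> = \<bar>c r + (\<Sum>k<n-s. A r k * c (s + 1 + k))\<bar>" by simp
  also have "\<dots> \<le> supnorm_plus n s A c" unfolding supnorm_plus_def
    by (rule Max_ge) (use assms(1) in auto)
  finally show ?thesis .
qed

lemma ge1: "(x::real) \<in> \<int> \<Longrightarrow> x \<noteq> 0 \<Longrightarrow> 1 \<le> \<bar>x\<bar>"
  by (elim Ints_cases) auto

theorem lemma4p5:
  fixes n s :: nat and A :: "nat \<Rightarrow> nat \<Rightarrow> real" and w :: "nat set \<Rightarrow> real"
  assumes "1 \<le> s" and "s \<le> n - 1" and "w \<in> S_set n n"
  shows "Max ((\<lambda>I. supnorm_plus n s A (cvec n I w)) ` {I. I \<subseteq> {0..n} \<and> 0 \<in> I \<and> card I = n}) \<ge> 1"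
proof -
  from assms(3) obtain v where v: "int_lin_indep n n v"
    and w: "w = (\<lambda>I. if I \<subseteq> {0..n} \<and> card I = n then wedge_coord n v I else 0)"
    unfolding S_set_def by blast
  have wc: "wedge_coord n v J = real_of_int (det (Mx n v (sorted_list_of_set J)))" for J
    unfolding wedge_coord_def Mx_def by (rule ldet_eq)
  have wint: "w J \<in> \<int>" for J by (simp add: w wc)
  obtain J0 where J0: "J0 \<subseteq> {0..n}" "card J0 = n" "det (Mx n v (sorted_list_of_set J0)) \<noteq> 0"
    using exists_nonzero[OF v] by blast
  have wJ0: "w J0 \<noteq> 0" using J0 by (simp add: w wc)
  define S where "S = {I. I \<subseteq> {0..n} \<and> 0 \<in> I \<and> card I = n}"
  have finS: "finite S" unfolding S_def
    by (rule finite_subset[of _ "Pow {0..n}"]) auto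
  have key: "1 \<le> Max ((\<lambda>I. supnorm_plus n s A (cvec n I w)) ` S)"
    if "I \<in> S" "r \<le> s" "\<forall>i>s. cvec n I w i = 0" "1 \<le> \<bar>cvec n I w r\<bar>" for I r
  proof -
    have "1 \<le> supnorm_plus n s A (cvec n I w)"
      using supnorm_ge[OF that(2,3), of n A] that(4) by linarith
    also have "\<dots> \<le> Max ((\<lambda>I. supnorm_plus n s A (cvec n I w)) ` S)"
      by (rule Max_ge) (use finS that(1) in auto)
    finally show ?thesis .
  qed
  have n2: "2 \<le> n" using assms(1,2) by linarith
  have card1n: "card {1..n} = n" by simp
  show ?thesis
  proof (cases "w {1..n} = 0")
    case False
    define I1 where "I1 = {0..n} - {1}"
    have I1S: "I1 \<in> S" unfolding S_def I1_def using n2 by auto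
    have z: "\<forall>i>s. cvec n I1 w i = 0"
      using assms(1) by (auto simp: cvec_def I1_def)
    have e: "I1 \<union> {1} - {0} = {1..n}" unfolding I1_def using n2 by auto
    have m: "1 \<in> {1..n} - I1" using n2 by (auto simp: I1_def)
    have "cvec n I1 w 1 = (-1) ^ lcount I1 1 * w (I1 \<union> {1} - {0})"
      using m by (simp add: cvec_def)
    also have "\<dots> = (-1) ^ lcount I1 1 * w {1..n}" by (simp only: e)
    finally have "cvec n I1 w 1 = (-1) ^ lcount I1 1 * w {1..n}" .
    then have "\<bar>cvec n I1 w 1\<bar> = \<bar>w {1..n}\<bar>" by (simp add: abs_mult)
    then have "1 \<le> \<bar>cvec n I1 w 1\<bar>" using ge1[OF wint False] by simp
    then show ?thesis using key[OF I1S assms(1) z] unfolding S_def by simp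
  next
    case True
    have "0 \<in> J0"
    proof (rule ccontr)
      assume "0 \<notin> J0"
      then have "J0 \<subseteq> {1..n}" using J0(1) by (auto simp: subset_iff Suc_le_eq) (metis not_gr0)
      then have "J0 = {1..n}" using J0(2) card1n by (intro card_subset_eq) auto
      then show False using True wJ0 by simp
    qed
    then have J0S: "J0 \<in> S" unfolding S_def using J0 by auto
    have z: "cvec n J0 w i = 0" if "i \<noteq> 0" for i
    proof (cases "i \<in> {1..n} - J0")
      case True
      have sub: "J0 \<union> {i} - {0} \<subseteq> {1..n}" using J0(1) True by auto
      have "card (J0 - {0}) = n - 1" using J0 \<open>0 \<in> J0\<close> by (simp add: finite_subset)
      moreover have "J0 \<union> {i} - {0} = insert i (J0 - {0})" using True by auto
      moreover have "finite J0" using J0(1) finite_subset by auto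
      ultimately have "card (J0 \<union> {i} - {0}) = n" using True n2 by simp
      then have "J0 \<union> {i} - {0} = {1..n}" using sub card1n by (intro card_subset_eq) auto
      then show ?thesis using \<open>w {1..n} = 0\<close> that by (simp add: cvec_def)
    next
      case False
      then show ?thesis using that by (auto simp: cvec_def)
    qed
    have "cvec n J0 w 0 = w J0" by (simp add: cvec_def)
    then have c0: "1 \<le> \<bar>cvec n J0 w 0\<bar>" using ge1[OF wint wJ0] by simp
    have "\<forall>i>s. cvec n J0 w i = 0" using z by simp
    then show ?thesis using key[OF J0S _ _ c0] unfolding S_def by simp
  qed
qed

end
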